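(* Let $k\in\{1,2,\dots\}\cup\{\infty\}$, $a,b>0$, $f\in D^k(\mathbb{R},0)$, $\tau_1=f'(0)$, and $q=w_b\circ f\circ w_a\in H^k(\mathbb{R},0)$. (a) If $\tau_1>0$, then $q$ is $C^1$ if and only if $a=1/b$. (b) If $\tau_1<0$, then $q$ is $C^1$ if and only if $a=b$. (c) Suppose $q$ is $C^1$, $a,b\neq1$, and $n$ is an integer with $2\le n\le k$. Then $q$ is $C^n$ if and only if $f''(0)=\cdots=f^{(n)}(0)=0$.
   Context: $H^k(\mathbb{R},0)$ is the group of homeomorphisms $h$ of $\mathbb{R}$ with $h(0)=0$ whose restriction to $\mathbb{R}\setminus\{0\}$ is a $C^k$-diffeomorphism of $\mathbb{R}\setminus\{0\}$; $D^k(\mathbb{R},0)$ is its subgroup of $C^k$-diffeomorphisms of $\mathbb{R}$. For $c>0$, $w_c\colon\mathbb{R}\to\mathbb{R}$ is $w_c(x)=x$ for $x\le0$ and $w_c(x)=cx$ for $x>0$. *)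

theory Defs
  imports "HOL-Analysis.Analysis" "HOL-Library.Extended_Nat"
begin

definition Cn_on :: "nat \<Rightarrow> real set \<Rightarrow> (real \<Rightarrow> real) \<Rightarrow> bool" where
  "Cn_on n S f \<longleftrightarrow>
     (\<forall>m<n. \<forall>x\<in>S. ((deriv ^^ m) f has_real_derivative (deriv ^^ Suc m) f x) (at x))
     \<and> continuous_on S ((deriv ^^ n) f)"

definition Ck_on :: "enat \<Rightarrow> real set \<Rightarrow> (real \<Rightarrow> real) \<Rightarrow> bool" where
  "Ck_on k S f \<longleftrightarrow> (\<forall>n::nat. enat n \<le> k \<longrightarrow> Cn_on n S f)"

definition Hk0 :: "enat \<Rightarrow> (real \<Rightarrow> real) set" where
  "Hk0 k = {h. h 0 = 0 \<and> (\<exists>g. homeomorphism UNIV UNIV h g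
              \<and> Ck_on k (- {0}) h \<and> Ck_on k (- {0}) g)}"

definition Dk0 :: "enat \<Rightarrow> (real \<Rightarrow> real) set" where
  "Dk0 k = {h. h 0 = 0 \<and> (\<exists>g. homeomorphism UNIV UNIV h g
              \<and> Ck_on k UNIV h \<and> Ck_on k UNIV g)}"

definition w :: "real \<Rightarrow> real \<Rightarrow> real" where
  "w c x = (if x \<le> 0 then x else c * x)"

end

theory Submission
  imports Defs
begin


lemma deriv_glue:
  assumes "(g has_field_derivative D) (at 0 within {..0})"
      and "(g has_field_derivative D) (at 0 within {0..})"
  shows "(g has_field_derivative D) (at (0::real))"
proof -
  have U: "{..0} \<union> {0..} = (UNIV::real set)" by auto
  have "((\<lambda>y. (g y - g 0) / (y - 0)) \<longlongrightarrow> D) (at 0 within ({..0} \<union> {0..}))"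
    using assms unfolding has_field_derivative_iff by (rule Lim_Un)
  then show ?thesis unfolding U has_field_derivative_iff .
qed

lemma deriv_left_unique:
  assumes "(g has_field_derivative D) (at 0 within {..0})"
      and "(g has_field_derivative E) (at 0 within {..0})"
  shows "D = (E::real)"
proof -
  have "(g has_vector_derivative D) (at_left 0)" "(g has_vector_derivative E) (at_left 0)"
    using assms by (auto intro: DERIV_subset simp: has_real_derivative_iff_has_vector_derivative[symmetric])
  moreover have "at_left (0::real) \<noteq> bot" using trivial_limit_at_left_real[of 0] by (simp only: trivial_limit_def) 
  ultimately show ?thesis using vector_derivative_unique_within by blast
qed

lemma deriv_right_unique:
  assumes "(g has_field_derivative D) (at 0 within {0..})"
      and "(g has_field_derivative E) (at 0 within {0..})"
  shows "D = (E::real)"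
proof -
  have "(g has_vector_derivative D) (at_right 0)" "(g has_vector_derivative E) (at_right 0)"
    using assms by (auto intro: DERIV_subset simp: has_real_derivative_iff_has_vector_derivative[symmetric])
  moreover have "at_right (0::real) \<noteq> bot" using trivial_limit_at_right_real[of 0] by (simp only: trivial_limit_def) 
  ultimately show ?thesis using vector_derivative_unique_within by blast
qed

lemma scale_deriv:
  assumes "Cn_on n UNIV f" "m \<le> n"
  shows "(deriv ^^ m) (\<lambda>x. c * f (a*x)) = (\<lambda>x. c * a^m * (deriv ^^ m) f (a*x))"
  using assms(2)
proof (induction m)
  case 0 then show ?case by simp
next
  case (Suc m)
  have D: "((deriv ^^ m) f has_real_derivative (deriv ^^ Suc m) f y) (at y)" for y
    using assms(1) Suc.prems unfolding Cn_on_def by auto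
  have "DERIV (\<lambda>x. c * a^m * (deriv ^^ m) f (a*x)) x :> c * a^m * ((deriv ^^ Suc m) f (a*x) * a)" for x
    using DERIV_cmult[OF DERIV_chain2[OF D DERIV_cmult_Id], of "c * a^m" a] by simp
  hence "deriv (\<lambda>x. c * a^m * (deriv ^^ m) f (a*x)) x = c * a ^ Suc m * (deriv ^^ Suc m) f (a*x)" for x
  proof -
    have "deriv (\<lambda>x. c * a^m * (deriv ^^ m) f (a*x)) x = c * a^m * ((deriv ^^ Suc m) f (a*x) * a)"
      by (rule DERIV_imp_deriv) fact
    also have "\<dots> = c * a ^ Suc m * (deriv ^^ Suc m) f (a*x)" by (simp only: power_Suc) (simp add: algebra_simps)
    finally show ?thesis .
  qed
  moreover have "(deriv ^^ m) (\<lambda>x. c * f (a*x)) = (\<lambda>x. c * a^m * (deriv ^^ m) f (a*x))"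
    using Suc by simp
  ultimately show ?case by (simp only: funpow.simps(2) o_apply)
qed

lemma scale_Cn:
  assumes "Cn_on n UNIV f"
  shows "Cn_on n UNIV (\<lambda>x. c * f (a*x))"
proof -
  have D: "\<And>m y. m < n \<Longrightarrow> ((deriv ^^ m) f has_real_derivative (deriv ^^ Suc m) f y) (at y)"
      and C: "continuous_on UNIV ((deriv ^^ n) f)"
    using assms unfolding Cn_on_def by auto
  have "((deriv ^^ m) (\<lambda>x. c * f (a*x)) has_real_derivative (deriv ^^ Suc m) (\<lambda>x. c * f (a*x)) x) (at x)"
    if "m < n" for m x
  proof -
    have "DERIV (\<lambda>x. c * a^m * (deriv ^^ m) f (a*x)) x :> c * a^m * ((deriv ^^ Suc m) f (a*x) * a)"
      using DERIV_cmult[OF DERIV_chain2[OF D[OF that] DERIV_cmult_Id], of "c * a^m" a] by simp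
    thus ?thesis using scale_deriv[OF assms, of m c a] scale_deriv[OF assms, of "Suc m" c a] that
      by (simp add: algebra_simps)
  qed
  moreover have "continuous_on UNIV ((deriv ^^ n) (\<lambda>x. c * f (a*x)))"
    unfolding scale_deriv[OF assms order_refl]
    by (intro continuous_intros continuous_on_compose2[OF C]) auto
  ultimately show ?thesis unfolding Cn_on_def by auto
qed

lemma glue_step:
  fixes L R :: "real \<Rightarrow> real"
  assumes L: "Cn_on n UNIV L" and R: "Cn_on n UNIV R"
    and Q_def: "Q = (\<lambda>m x. if x \<le> 0 then (deriv ^^ m) L x else (deriv ^^ m) R x)"
    and mn: "m < n"
    and eq: "(deriv ^^ m) L 0 = (deriv ^^ m) R 0"
  shows "x \<noteq> 0 \<Longrightarrow> (Q m has_real_derivative Q (Suc m) x) (at x)"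
    and "(Q m has_real_derivative (deriv ^^ Suc m) L 0) (at 0 within {..0})"
    and "(Q m has_real_derivative (deriv ^^ Suc m) R 0) (at 0 within {0..})"
proof -
  have DL: "((deriv ^^ m) L has_real_derivative (deriv ^^ Suc m) L y) (at y)" for y
    using L mn unfolding Cn_on_def by auto
  have DR: "((deriv ^^ m) R has_real_derivative (deriv ^^ Suc m) R y) (at y)" for y
    using R mn unfolding Cn_on_def by auto
  show "(Q m has_real_derivative Q (Suc m) x) (at x)" if "x \<noteq> 0"
  proof (cases "x < 0")
    case True
    have "(Q m has_real_derivative (deriv ^^ Suc m) L x) (at x)"
      by (rule has_field_derivative_transform_within_open[OF DL, of "{..<0}"])
         (use True in \<open>auto simp: Q_def\<close>)
    thus ?thesis using True by (simp add: Q_def)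
  next
    case False
    hence x: "x > 0" using that by auto
    have "(Q m has_real_derivative (deriv ^^ Suc m) R x) (at x)"
      by (rule has_field_derivative_transform_within_open[OF DR, of "{0<..}"])
         (use x in \<open>auto simp: Q_def\<close>)
    thus ?thesis using x by (simp add: Q_def)
  qed
  show "(Q m has_real_derivative (deriv ^^ Suc m) L 0) (at 0 within {..0})"
    by (rule has_field_derivative_transform_within[OF has_field_derivative_at_within[OF DL], of 1])
       (auto simp: Q_def)
  show "(Q m has_real_derivative (deriv ^^ Suc m) R 0) (at 0 within {0..})"
    by (rule has_field_derivative_transform_within[OF has_field_derivative_at_within[OF DR], of 1])
       (use eq in \<open>auto simp: Q_def\<close>)
qed

lemma glue:
  fixes L R :: "real \<Rightarrow> real"
  assumes L: "Cn_on n UNIV L" and R: "Cn_on n UNIV R" and eq0: "L 0 = R 0"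
  shows "Cn_on n UNIV (\<lambda>x. if x \<le> 0 then L x else R x) \<longleftrightarrow>
         (\<forall>j\<le>n. (deriv ^^ j) L 0 = (deriv ^^ j) R 0)"
proof -
  define Q where "Q = (\<lambda>m x. if x \<le> 0 then (deriv ^^ m) L x else (deriv ^^ m) R x)"
  have q0: "(\<lambda>x. if x \<le> 0 then L x else R x) = Q 0" unfolding Q_def by (simp add: fun_eq_iff)
  note st = glue_step[OF L R Q_def]
  show ?thesis
  proof
    assume C: "Cn_on n UNIV (\<lambda>x. if x \<le> 0 then L x else R x)"
    have D: "\<And>m x. m < n \<Longrightarrow> ((deriv ^^ m) (Q 0) has_real_derivative (deriv ^^ Suc m) (Q 0) x) (at x)"
      using C unfolding Cn_on_def q0 by auto
    have "m \<le> n \<longrightarrow> (deriv ^^ m) (Q 0) = Q m \<and> (deriv ^^ m) L 0 = (deriv ^^ m) R 0" for m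
    proof (induction m)
      case 0 then show ?case using eq0 by simp
    next
      case (Suc m)
      show ?case
      proof
        assume sm: "Suc m \<le> n"
        with Suc.IH have IH: "(deriv ^^ m) (Q 0) = Q m" "(deriv ^^ m) L 0 = (deriv ^^ m) R 0" by auto
        have Dm: "(Q m has_real_derivative (deriv ^^ Suc m) (Q 0) x) (at x)" for x
          using D[of m x] sm IH by simp
        have l: "(deriv ^^ Suc m) (Q 0) 0 = (deriv ^^ Suc m) L 0"
          using deriv_left_unique[OF has_field_derivative_at_within[OF Dm] st(2)[OF _ IH(2)]] sm by simp
        have r: "(deriv ^^ Suc m) (Q 0) 0 = (deriv ^^ Suc m) R 0"
          using deriv_right_unique[OF has_field_derivative_at_within[OF Dm] st(3)[OF _ IH(2)]] sm by simp
        have "(deriv ^^ Suc m) (Q 0) x = Q (Suc m) x" for x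
        proof (cases "x = 0")
          case True then show ?thesis using l by (simp add: Q_def)
        next
          case False
          then show ?thesis using DERIV_unique[OF Dm st(1)[OF _ IH(2) False]] sm by simp
        qed
        then show "(deriv ^^ Suc m) (Q 0) = Q (Suc m) \<and> (deriv ^^ Suc m) L 0 = (deriv ^^ Suc m) R 0"
          using l r by auto
      qed
    qed
    then show "\<forall>j\<le>n. (deriv ^^ j) L 0 = (deriv ^^ j) R 0" by auto
  next
    assume E: "\<forall>j\<le>n. (deriv ^^ j) L 0 = (deriv ^^ j) R 0"
    have DQ: "(Q m has_real_derivative Q (Suc m) x) (at x)" if "m < n" for m x
    proof (cases "x = 0")
      case True
      have e: "(deriv ^^ m) L 0 = (deriv ^^ m) R 0" "(deriv ^^ Suc m) L 0 = (deriv ^^ Suc m) R 0"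
        using E that Suc_leI[OF that] less_imp_le by blast+
      have "(Q m has_real_derivative (deriv ^^ Suc m) L 0) (at 0)"
        using deriv_glue[OF st(2)[OF that e(1)]] st(3)[OF that e(1)] e(2) by simp
      hence "(Q m has_real_derivative Q (Suc m) 0) (at 0)"
        by (simp add: Q_def)
      then show ?thesis using True by simp
    next
      case False then show ?thesis using st(1)[OF that _ False] E that by simp
    qed
    have QE: "m \<le> n \<Longrightarrow> (deriv ^^ m) (Q 0) = Q m" for m
    proof (induction m)
      case 0 then show ?case by simp
    next
      case (Suc m)
      then have "(deriv ^^ m) (Q 0) = Q m" by simp
      moreover have "deriv (Q m) = Q (Suc m)"
        using DQ[of m] Suc.prems by (intro ext DERIV_imp_deriv) simp
      ultimately show ?case by simp
    qed
    have cont: "continuous_on UNIV (Q n)"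
    proof -
      have U: "UNIV = {..0::real} \<union> {0..}" by auto
      have c1: "continuous_on {..0} (Q n)"
        using L unfolding Cn_on_def
        by (rule conjE) (erule continuous_on_subset[THEN continuous_on_eq], auto simp: Q_def)
      have c2: "continuous_on {0..} (Q n)"
        using R unfolding Cn_on_def
        by (rule conjE) (erule continuous_on_subset[THEN continuous_on_eq], use E in \<open>auto simp: Q_def\<close>)
      show ?thesis by (subst U, rule continuous_on_closed_Un[OF _ _ c1 c2]) auto
    qed
    show "Cn_on n UNIV (\<lambda>x. if x \<le> 0 then L x else R x)"
      unfolding Cn_on_def q0
      using QE DQ cont DERIV_imp_deriv[OF DQ] by (simp add: Suc_leI)
  qed
qed


lemma sign_same:
  fixes f :: "real \<Rightarrow> real"
  assumes "a \<le> b" "continuous_on UNIV f" "\<forall>z\<in>{a..b}. f z \<noteq> 0" "f a > 0"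
  shows "f b > 0"
proof (rule ccontr)
  assume "\<not> f b > 0"
  then obtain z where "a \<le> z" "z \<le> b" "f z = 0"
  proof -
    have c: "continuous_on {a..b} f" using assms(2) continuous_on_subset by blast
    have "f b \<le> 0" "0 \<le> f a" using \<open>\<not> f b > 0\<close> assms(4) by auto
    from IVT2'[of f b 0 a, OF this assms(1) c] show ?thesis using that by blast
  qed
  thus False using assms by auto
qed

lemma sign_pos:
  fixes f :: "real \<Rightarrow> real"
  assumes D: "DERIV f 0 :> l" and l: "l > 0" and cont: "continuous_on UNIV f"
    and f0: "f 0 = 0" and nz: "\<forall>z. z \<noteq> 0 \<longrightarrow> f z \<noteq> 0"
  shows "(\<forall>x>0. f x > 0) \<and> (\<forall>x<0. f x < 0)"
proof -
  obtain d1 where d1: "d1 > 0" "\<forall>h>0. h < d1 \<longrightarrow> f 0 < f (0 + h)"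
    using DERIV_pos_inc_right[OF D l] by blast
  obtain d2 where d2: "d2 > 0" "\<forall>h>0. h < d2 \<longrightarrow> f (0 - h) < f 0"
    using DERIV_pos_inc_left[OF D l] by blast
  have P: "f x > 0" if "x > 0" for x
  proof -
    define y where "y = min x (d1/2)"
    have "f y > 0"
    proof (cases "x \<le> d1/2")
      case True
      hence "y = 0 + x" unfolding y_def by simp
      moreover have "f (0 + x) > f 0" using d1(2)[rule_format, of x] True that d1(1) by linarith
      ultimately show ?thesis using f0 by (simp only:)
    next
      case False
      hence "y = 0 + d1/2" unfolding y_def by simp
      moreover have "f (0 + d1/2) > f 0" using d1(2)[rule_format, of "d1/2"] d1(1) by linarith
      ultimately show ?thesis using f0 by (simp only:)
    qed
    moreover have "y > 0" "y \<le> x" using that d1 unfolding y_def by auto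
    moreover have "\<forall>z\<in>{y..x}. f z \<noteq> 0" using nz \<open>y > 0\<close> by fastforce
    ultimately show ?thesis using sign_same[of y x f] cont by blast
  qed
  have N: "f x < 0" if "x < 0" for x
  proof (rule ccontr)
    assume "\<not> f x < 0"
    moreover have "f x \<noteq> 0" using nz that by simp
    ultimately have fx: "f x > 0" by linarith
    define y where "y = max x (-d2/2)"
    have "f y < 0"
    proof (cases "x \<le> -d2/2")
      case True
      hence "y = 0 - d2/2" unfolding y_def by simp
      moreover have "f (0 - d2/2) < f 0" using d2(2)[rule_format, of "d2/2"] d2(1) by linarith
      ultimately show ?thesis using f0 by (simp only:)
    next
      case False
      hence "y = 0 - (-x)" unfolding y_def by simp
      moreover have "f (0 - (-x)) < f 0" using d2(2)[rule_format, of "-x"] False that by linarith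
      ultimately show ?thesis using f0 by (simp only:)
    qed
    moreover have "y < 0" "x \<le> y" using that d2 unfolding y_def by auto
    moreover have "\<forall>z\<in>{x..y}. f z \<noteq> 0" using nz \<open>y < 0\<close> by fastforce
    ultimately have "f y > 0" using sign_same[of x y f] cont fx by blast
    with \<open>f y < 0\<close> show False by simp
  qed
  show ?thesis using P N by auto
qed



lemma combine:
  assumes "E 0" "E 1" "\<And>j. j \<ge> 2 \<Longrightarrow> E j \<longleftrightarrow> F j"
  shows "(\<forall>j\<le>n. E (j::nat)) \<longleftrightarrow> (\<forall>j\<in>{2..n}. F j)"
proof
  assume "\<forall>j\<le>n. E j" thus "\<forall>j\<in>{2..n}. F j" using assms(3) by auto
next
  assume H: "\<forall>j\<in>{2..n}. F j"
  show "\<forall>j\<le>n. E j"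
  proof (intro allI impI)
    fix j assume "j \<le> n"
    show "E j"
    proof (cases "j < 2")
      case True hence "j = 0 \<or> j = 1" by auto
      thus ?thesis using assms by auto
    next
      case False thus ?thesis using H assms(3) \<open>j \<le> n\<close> by auto
    qed
  qed
qed

lemma le1_iff: "(\<forall>j\<le>(1::nat). P j) \<longleftrightarrow> P 0 \<and> P 1"
  by (auto simp: le_Suc_eq)

lemma pow_ne1:
  fixes a :: real
  assumes "a > 0" "a \<noteq> 1" "m \<ge> 1"
  shows "a ^ m \<noteq> 1"
  using power_eq_1_iff[of a m] assms by auto

theorem lemma5p16:
  fixes k :: enat and a b :: real and f q :: "real \<Rightarrow> real"
  assumes "k \<ge> 1"
    and "a > 0" and "b > 0"
    and "f \<in> Dk0 k"
    and "q = w b \<circ> f \<circ> w a"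
  shows "(deriv f 0 > 0 \<longrightarrow> (Cn_on 1 UNIV q \<longleftrightarrow> a = 1 / b))
       \<and> (deriv f 0 < 0 \<longrightarrow> (Cn_on 1 UNIV q \<longleftrightarrow> a = b))
       \<and> (Cn_on 1 UNIV q \<and> a \<noteq> 1 \<and> b \<noteq> 1 \<longrightarrow>
            (\<forall>n::nat. 2 \<le> n \<and> enat n \<le> k \<longrightarrow>
               (Cn_on n UNIV q \<longleftrightarrow> (\<forall>j\<in>{2..n}. (deriv ^^ j) f 0 = 0))))"
proof -
  from assms(4) obtain g where f0: "f 0 = 0" and hom: "homeomorphism UNIV UNIV f g"
    and Ckf: "Ck_on k UNIV f" and Ckg: "Ck_on k UNIV g" unfolding Dk0_def by auto
  have Cnf: "Cn_on n UNIV f" if "enat n \<le> k" for n using Ckf that unfolding Ck_on_def by auto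
  have k1: "enat 1 \<le> k" using assms(1) by (simp add: one_enat_def)
  have Df: "DERIV f x :> deriv f x" for x using Cnf[OF k1] unfolding Cn_on_def by auto
  have Dg: "DERIV g x :> deriv g x" for x using Ckg k1 unfolding Ck_on_def Cn_on_def by auto
  have gf: "g (f x) = x" for x using hom unfolding homeomorphism_def by auto
  have "DERIV (\<lambda>x. g (f x)) 0 :> deriv g (f 0) * deriv f 0" by (rule DERIV_chain2[OF Dg Df])
  moreover have "(\<lambda>x. g (f x)) = (\<lambda>x. x)" using gf by auto
  ultimately have "deriv g (f 0) * deriv f 0 = 1" using DERIV_ident DERIV_unique by metis
  hence tne: "deriv f 0 \<noteq> 0" by auto
  have cont: "continuous_on UNIV f" using hom unfolding homeomorphism_def by auto
  have nz: "\<forall>z. z \<noteq> 0 \<longrightarrow> f z \<noteq> 0" using gf f0 by metis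
  have f00: "(deriv ^^ 0) f 0 = 0" using f0 by simp
  have POS: "Cn_on n UNIV q \<longleftrightarrow> (\<forall>j\<le>n. (deriv ^^ j) f 0 = b * a^j * (deriv ^^ j) f 0)"
    if pos: "deriv f 0 > 0" and nk: "enat n \<le> k" for n
  proof -
    have sg: "(\<forall>x>0. f x > 0) \<and> (\<forall>x<0. f x < 0)" by (rule sign_pos[OF Df pos cont f0 nz])
    have qe: "q = (\<lambda>x. if x \<le> 0 then f x else b * f (a*x))"
    proof
      fix x show "q x = (if x \<le> 0 then f x else b * f (a*x))"
      proof (cases "x \<le> 0")
        case True
        have "f x \<le> 0"
        proof (cases "x = 0")
          case False hence "x < 0" using True by simp
          thus ?thesis using sg by (simp add: less_imp_le)
        qed (simp add: f0)
        thus ?thesis using True unfolding assms(5) w_def by simp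
      next
        case False
        hence "a * x > 0" using assms(2) by simp
        hence "f (a*x) > 0" using sg by simp
        thus ?thesis using False \<open>a * x > 0\<close> unfolding assms(5) w_def by simp
      qed
    qed
    have "Cn_on n UNIV q \<longleftrightarrow> (\<forall>j\<le>n. (deriv ^^ j) f 0 = (deriv ^^ j) (\<lambda>x. b * f (a*x)) 0)"
      unfolding qe by (rule glue[OF Cnf[OF nk] scale_Cn[OF Cnf[OF nk]]]) (simp add: f0)
    also have "\<dots> \<longleftrightarrow> (\<forall>j\<le>n. (deriv ^^ j) f 0 = b * a^j * (deriv ^^ j) f 0)"
      using scale_deriv[OF Cnf[OF nk]] by simp
    finally show ?thesis .
  qed
  have NEG: "Cn_on n UNIV q \<longleftrightarrow> (\<forall>j\<le>n. b * (deriv ^^ j) f 0 = a^j * (deriv ^^ j) f 0)"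
    if neg: "deriv f 0 < 0" and nk: "enat n \<le> k" for n
  proof -
    have D': "DERIV (\<lambda>x. - f x) 0 :> - deriv f 0" using Df by (rule DERIV_minus)
    have sg': "(\<forall>x>0. - f x > 0) \<and> (\<forall>x<0. - f x < 0)"
      by (rule sign_pos[OF D']) (use neg f0 nz in \<open>auto intro!: continuous_intros cont\<close>)
    hence sg: "(\<forall>x>0. f x < 0) \<and> (\<forall>x<0. f x > 0)" by auto
    have qe: "q = (\<lambda>x. if x \<le> 0 then b * f (1*x) else 1 * f (a*x))"
    proof
      fix x show "q x = (if x \<le> 0 then b * f (1*x) else 1 * f (a*x))"
      proof (cases "x \<le> 0")
        case True
        have "f x \<ge> 0"
        proof (cases "x = 0")
          case False hence "x < 0" using True by simp
          thus ?thesis using sg by (simp add: less_imp_le)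
        qed (simp add: f0)
        thus ?thesis using True f0 unfolding assms(5) w_def by auto
      next
        case False
        hence "a * x > 0" using assms(2) by simp
        hence "f (a*x) < 0" using sg by simp
        thus ?thesis using False \<open>a * x > 0\<close> unfolding assms(5) w_def by simp
      qed
    qed
    have "Cn_on n UNIV q \<longleftrightarrow> (\<forall>j\<le>n. (deriv ^^ j) (\<lambda>x. b * f (1*x)) 0 = (deriv ^^ j) (\<lambda>x. 1 * f (a*x)) 0)"
      unfolding qe by (rule glue[OF scale_Cn[OF Cnf[OF nk]] scale_Cn[OF Cnf[OF nk]]]) (simp add: f0)
    also have "\<dots> \<longleftrightarrow> (\<forall>j\<le>n. b * (deriv ^^ j) f 0 = a^j * (deriv ^^ j) f 0)"
      using scale_deriv[OF Cnf[OF nk], of _ b 1] scale_deriv[OF Cnf[OF nk], of _ 1 a] by simp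
    finally show ?thesis .
  qed
  have A: "Cn_on 1 UNIV q \<longleftrightarrow> a = 1 / b" if pos: "deriv f 0 > 0"
  proof -
    have "Cn_on 1 UNIV q \<longleftrightarrow> deriv f 0 = b * a * deriv f 0"
      using POS[OF pos k1] f0 unfolding le1_iff by simp
    also have "\<dots> \<longleftrightarrow> b * a = 1" using tne
      by (metis mult_cancel_right2)
    also have "\<dots> \<longleftrightarrow> a = 1 / b" using assms(3) by (auto simp: field_simps)
    finally show ?thesis .
  qed
  have B: "Cn_on 1 UNIV q \<longleftrightarrow> a = b" if neg: "deriv f 0 < 0"
  proof -
    have "Cn_on 1 UNIV q \<longleftrightarrow> b * deriv f 0 = a * deriv f 0"
      using NEG[OF neg k1] f0 unfolding le1_iff by simp
    also have "\<dots> \<longleftrightarrow> a = b" using tne by auto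
    finally show ?thesis .
  qed
  have C: "Cn_on n UNIV q \<longleftrightarrow> (\<forall>j\<in>{2..n}. (deriv ^^ j) f 0 = 0)"
    if C1: "Cn_on 1 UNIV q" and a1: "a \<noteq> 1" and b1: "b \<noteq> 1" and n2: "2 \<le> n" and nk: "enat n \<le> k" for n
  proof (cases "deriv f 0 > 0")
    case True
    hence ab: "a = 1 / b" using A C1 by blast
    show ?thesis unfolding POS[OF True nk]
    proof (rule combine)
      show "(deriv ^^ 0) f 0 = b * a ^ 0 * (deriv ^^ 0) f 0" using f0 by simp
      show "(deriv ^^ 1) f 0 = b * a ^ 1 * (deriv ^^ 1) f 0" using ab assms(3) by simp
      fix j :: nat assume j: "j \<ge> 2"
      have "b * a ^ j = a ^ (j - 1)" using ab assms(3) j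
        by (simp add: power_eq_if)
      moreover have "a ^ (j - 1) \<noteq> 1" using pow_ne1[OF assms(2) a1] j by simp
      ultimately have "b * a ^ j \<noteq> 1" by simp
      thus "(deriv ^^ j) f 0 = b * a ^ j * (deriv ^^ j) f 0 \<longleftrightarrow> (deriv ^^ j) f 0 = 0"
        by (metis mult_cancel_right2 mult.commute)
    qed
  next
    case False
    hence neg: "deriv f 0 < 0" using tne by auto
    hence ab: "a = b" using B C1 by blast
    show ?thesis unfolding NEG[OF neg nk]
    proof (rule combine)
      show "b * (deriv ^^ 0) f 0 = a ^ 0 * (deriv ^^ 0) f 0" using f0 by simp
      show "b * (deriv ^^ 1) f 0 = a ^ 1 * (deriv ^^ 1) f 0" using ab by simp
      fix j :: nat assume j: "j \<ge> 2"
      have "a ^ j = b * b ^ (j - 1)" using ab j by (simp add: power_eq_if)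
      moreover have "b ^ (j - 1) \<noteq> 1" using pow_ne1[OF assms(3) b1] j by simp
      ultimately have "a ^ j \<noteq> b" using assms(3) by simp
      thus "b * (deriv ^^ j) f 0 = a ^ j * (deriv ^^ j) f 0 \<longleftrightarrow> (deriv ^^ j) f 0 = 0"
        by (metis mult_cancel_right)
    qed
  qed
  show ?thesis using A B C by blast
qed

thm_deps lemma5p16

end
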